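(* Let $n\ge1$. For every $0\le i<n$, $|\mathrm{I}A^2_{n,i}|=|\mathrm{I}B^2_{n,i}|$.
   Context: Fix $n\ge1$. $\mathrm{SBC}(n,0)=0$, $\mathrm{SBC}(n,i)=\sum_{j=0}^{i-1}\binom{n}{j}$ for $1\le i\le n+1$. For $0\le k<2^n$, $\mathrm{IStep}(n,k)$ is the unique $i\in\{0,\ldots,n\}$ with $\mathrm{SBC}(n,i)\le k<\mathrm{SBC}(n,i+1)$; $\mathrm{Weight}(k)$ is the number of 1's in the binary representation of $k$. For $0\le i\le n$: $\mathrm{I}A_{n,i}=\{k<2^n:\mathrm{IStep}(n,k)=i\}$, $\mathrm{I}B_{n,i}=\{k<2^n:\mathrm{Weight}(k)=i\}$, $\mathrm{I}A^1_{n,i}=\mathrm{I}A_{n,i}\setminus\mathrm{I}B_{n,i}$, $\mathrm{I}B^1_{n,i}=\mathrm{I}B_{n,i}\setminus\mathrm{I}A_{n,i}$. For $0\le i,j\le n$ with $i\ne j$: $\mathrm{I}C^1_{n,i,j}=\mathrm{I}A^1_{n,i}\cap\mathrm{I}B^1_{n,j}$, $\gamma^1_{n,i,j}=|\mathrm{I}C^1_{n,i,j}|$, and $\mathrm{I}\overline{C}^1_{n,i,j}$ is: all of $\mathrm{I}C^1_{n,i,j}$ if $\gamma^1_{n,i,j}\le\gamma^1_{n,j,i}$; the $\gamma^1_{n,j,i}$ smallest elements of $\mathrm{I}C^1_{n,i,j}$ if $\gamma^1_{n,i,j}>\gamma^1_{n,j,i}$ and $i>j$; the $\gamma^1_{n,j,i}$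 largest elements of $\mathrm{I}C^1_{n,i,j}$ if $\gamma^1_{n,i,j}>\gamma^1_{n,j,i}$ and $i<j$. Finally $\mathrm{I}A^2_{n,i}=\mathrm{I}A^1_{n,i}\setminus\bigcup_{j\ne i}\mathrm{I}\overline{C}^1_{n,i,j}$ and $\mathrm{I}B^2_{n,i}=\mathrm{I}B^1_{n,i}\setminus\bigcup_{j\ne i}\mathrm{I}\overline{C}^1_{n,j,i}$, where $j$ ranges over $\{0,\ldots,n\}\setminus\{i\}$. *)

theory Defs
  imports Main
begin

definition SBC :: "nat \<Rightarrow> nat \<Rightarrow> nat" where
  "SBC n i = (\<Sum>j<i. n choose j)"

definition IStep :: "nat \<Rightarrow> nat \<Rightarrow> nat" where
  "IStep n k = (THE i. i \<le> n \<and> SBC n i \<le> k \<and> k < SBC n (i + 1))"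

fun Weight :: "nat \<Rightarrow> nat" where
  "Weight k = (if k = 0 then 0 else k mod 2 + Weight (k div 2))"

definition IA :: "nat \<Rightarrow> nat \<Rightarrow> nat set" where
  "IA n i = {k. k < 2 ^ n \<and> IStep n k = i}"

definition IB :: "nat \<Rightarrow> nat \<Rightarrow> nat set" where
  "IB n i = {k. k < 2 ^ n \<and> Weight k = i}"

definition IA1 :: "nat \<Rightarrow> nat \<Rightarrow> nat set" where
  "IA1 n i = IA n i - IB n i"

definition IB1 :: "nat \<Rightarrow> nat \<Rightarrow> nat set" where
  "IB1 n i = IB n i - IA n i"

definition IC1 :: "nat \<Rightarrow> nat \<Rightarrow> nat \<Rightarrow> nat set" where
  "IC1 n i j = IA1 n i \<inter> IB1 n j"

definition gamma1 :: "nat \<Rightarrow> nat \<Rightarrow> nat \<Rightarrow> nat" where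
  "gamma1 n i j = card (IC1 n i j)"

definition smallest :: "nat \<Rightarrow> nat set \<Rightarrow> nat set" where
  "smallest m S = {x \<in> S. card {y \<in> S. y < x} < m}"

definition largest :: "nat \<Rightarrow> nat set \<Rightarrow> nat set" where
  "largest m S = {x \<in> S. card {y \<in> S. x < y} < m}"

definition ICbar1 :: "nat \<Rightarrow> nat \<Rightarrow> nat \<Rightarrow> nat set" where
  "ICbar1 n i j =
     (if gamma1 n i j \<le> gamma1 n j i then IC1 n i j
      else if j < i then smallest (gamma1 n j i) (IC1 n i j)
      else largest (gamma1 n j i) (IC1 n i j))"

definition IA2 :: "nat \<Rightarrow> nat \<Rightarrow> nat set" where
  "IA2 n i = IA1 n i - (\<Union>j \<in> {0..n} - {i}. ICbar1 n i j)"

definition IB2 :: "nat \<Rightarrow> nat \<Rightarrow> nat set" where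
  "IB2 n i = IB1 n i - (\<Union>j \<in> {0..n} - {i}. ICbar1 n j i)"

end

theory Submission
  imports Defs
begin

declare Weight.simps[simp del]

lemma Weight0[simp]: "Weight 0 = 0" by (simp add: Weight.simps)
lemma Weight_even[simp]: "Weight (2*k) = Weight k"
  by (cases "k = 0") (simp_all add: Weight.simps[of "2*k"])
lemma Weight_odd[simp]: "Weight (2*k+1) = Suc (Weight k)"
  by (subst Weight.simps) simp
lemma Weight_odd'[simp]: "Weight (Suc (2*k)) = Suc (Weight k)"
  using Weight_odd[of k] by simp

lemma IB_card_aux: "card {k. k < 2^n \<and> Weight k = i} = n choose i"
proof (induction n arbitrary: i)
  case 0
  have "{k. k < (2::nat)^0 \<and> Weight k = i} = (if i = 0 then {0} else {})" by auto
  then show ?case by simp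
next
  case (Suc n)
  have split: "k < 2^Suc n \<longleftrightarrow> k div 2 < 2^n" for k :: nat by auto
  have dec: "k = 2*(k div 2) \<or> k = 2*(k div 2)+1" for k :: nat by auto
  show ?case
  proof (cases i)
    case 0
    have "{k. k < 2^Suc n \<and> Weight k = i} = (\<lambda>k. 2*k) ` {k. k < 2^n \<and> Weight k = i}"
    proof (rule set_eqI, rule iffI)
      fix x assume x: "x \<in> {k. k < 2^Suc n \<and> Weight k = i}"
      show "x \<in> (\<lambda>k. 2*k) ` {k. k < 2^n \<and> Weight k = i}"
      proof (cases "x = 2*(x div 2)")
        case True
        then have "Weight x = Weight (x div 2)" by (metis Weight_even)
        then show ?thesis using x split[of x] True by (auto intro!: image_eqI[where x="x div 2"])
      next
        case False then have "x = 2*(x div 2)+1" using dec by blast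
        then have "Weight x = Suc (Weight (x div 2))" by (metis Weight_odd)
        then show ?thesis using x 0 by auto
      qed
    qed auto
    moreover have "inj (\<lambda>k::nat. 2*k)" by (auto simp: inj_def)
    ultimately show ?thesis using Suc.IH[of i] 0 by (simp add: card_image inj_on_def)
  next
    case (Suc i')
    have "{k. k < 2^Suc n \<and> Weight k = i} = (\<lambda>k. 2*k) ` {k. k < 2^n \<and> Weight k = i}
        \<union> (\<lambda>k. 2*k+1) ` {k. k < 2^n \<and> Weight k = i'}"
    proof (rule set_eqI, rule iffI)
      fix x assume x: "x \<in> {k. k < 2^Suc n \<and> Weight k = i}"
      show "x \<in> (\<lambda>k. 2*k) ` {k. k < 2^n \<and> Weight k = i} \<union> (\<lambda>k. 2*k+1) ` {k. k < 2^n \<and> Weight k = i'}"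
      proof (cases "x = 2*(x div 2)")
        case True
        then have "Weight x = Weight (x div 2)" by (metis Weight_even)
        then show ?thesis using x split[of x] True by (auto intro!: image_eqI[where x="x div 2"])
      next
        case False then have e: "x = 2*(x div 2)+1" using dec by blast
        then have "Weight x = Suc (Weight (x div 2))" by (metis Weight_odd)
        then show ?thesis using x split[of x] e Suc by (auto intro!: image_eqI[where x="x div 2"])
      qed
    qed (auto simp: Suc)
    moreover have "(\<lambda>k. 2*k) ` {k. k < 2^n \<and> Weight k = i} \<inter> (\<lambda>k. 2*k+1) ` {k. k < 2^n \<and> Weight k = i'} = {}"
      by auto presburger
    moreover have "card ((\<lambda>k::nat. 2*k) ` {k. k < 2^n \<and> Weight k = i}) = n choose i"
      using Suc.IH[of i] by (simp add: card_image inj_on_def)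
    moreover have "card ((\<lambda>k::nat. 2*k+1) ` {k. k < 2^n \<and> Weight k = i'}) = n choose i'"
      using Suc.IH[of i'] by (simp add: card_image inj_on_def)
    ultimately show ?thesis using Suc by (simp add: card_Un_disjoint)
  qed
qed

lemma card_IB: "card (IB n i) = n choose i"
  unfolding IB_def using IB_card_aux .

lemma SBC_mono: "a \<le> b \<Longrightarrow> SBC n a \<le> SBC n b"
  unfolding SBC_def by (rule sum_mono2) auto

lemma SBC_top: "SBC n (n+1) = 2^n"
  unfolding SBC_def by (simp add: lessThan_Suc_atMost choose_row_sum)

lemma SBC_Suc: "SBC n (Suc i) = SBC n i + (n choose i)"
  unfolding SBC_def by simp

lemma IStep_eq:
  assumes "j \<le> n" "SBC n j \<le> k" "k < SBC n (j+1)"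
  shows "IStep n k = j"
  unfolding IStep_def
proof (rule the_equality)
  show "j \<le> n \<and> SBC n j \<le> k \<and> k < SBC n (j + 1)" using assms by auto
next
  fix j' assume h: "j' \<le> n \<and> SBC n j' \<le> k \<and> k < SBC n (j' + 1)"
  show "j' = j"
  proof (rule ccontr)
    assume "j' \<noteq> j"
    then consider "j < j'" | "j' < j" by linarith
    then show False
    proof cases
      case 1 then have "SBC n (j+1) \<le> SBC n j'" by (intro SBC_mono) auto
      then show False using h assms by linarith
    next
      case 2 then have "SBC n (j'+1) \<le> SBC n j" by (intro SBC_mono) auto
      then show False using h assms by linarith
    qed
  qed
qed

lemma IStep_exists:
  assumes "k < 2^n"
  shows "\<exists>j \<le> n. SBC n j \<le> k \<and> k < SBC n (j+1)"
proof -
  define j where "j = (LEAST j. k < SBC n (j+1))"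
  have P: "k < SBC n (n+1)" using assms SBC_top by simp
  have j1: "k < SBC n (j+1)" unfolding j_def by (rule LeastI[of _ n]) (rule P)
  have j2: "j \<le> n" unfolding j_def by (rule Least_le) (rule P)
  have j3: "SBC n j \<le> k"
  proof (cases j)
    case 0 then show ?thesis by (simp add: SBC_def)
  next
    case (Suc j')
    then have "j' < j" by simp
    then have "\<not> k < SBC n (j'+1)" unfolding j_def by (rule not_less_Least)
    then show ?thesis using Suc by simp
  qed
  show ?thesis using j1 j2 j3 by blast
qed

lemma IA_eq: assumes "i \<le> n" shows "IA n i = {SBC n i ..< SBC n (Suc i)}"
proof (rule set_eqI, rule iffI)
  fix k assume "k \<in> IA n i"
  then have k: "k < 2^n" "IStep n k = i" by (auto simp: IA_def)
  obtain j where j: "j \<le> n" "SBC n j \<le> k" "k < SBC n (j+1)" using IStep_exists[OF k(1)] by blast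
  then have "IStep n k = j" by (rule IStep_eq)
  then show "k \<in> {SBC n i ..< SBC n (Suc i)}" using k j by auto
next
  fix k assume k: "k \<in> {SBC n i ..< SBC n (Suc i)}"
  have "SBC n (Suc i) \<le> SBC n (n+1)" using assms by (intro SBC_mono) auto
  then have "k < 2^n" using k SBC_top by auto
  moreover have "IStep n k = i" using k assms by (intro IStep_eq) auto
  ultimately show "k \<in> IA n i" by (simp add: IA_def)
qed

lemma card_IA: "i \<le> n \<Longrightarrow> card (IA n i) = n choose i"
  by (simp add: IA_eq SBC_Suc)

lemma fin_IA[simp]: "finite (IA n i)" by (rule finite_subset[of _ "{..<2^n}"]) (auto simp: IA_def)
lemma fin_IB[simp]: "finite (IB n i)" by (rule finite_subset[of _ "{..<2^n}"]) (auto simp: IB_def)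
lemma fin_IA1[simp]: "finite (IA1 n i)" by (simp add: IA1_def)
lemma fin_IB1[simp]: "finite (IB1 n i)" by (simp add: IB1_def)
lemma fin_IC1[simp]: "finite (IC1 n i j)" by (simp add: IC1_def)

lemma rank_card:
  fixes S :: "nat set" and f :: "nat \<Rightarrow> nat"
  assumes fin: "finite S" and inj: "inj_on f S" and rng: "\<And>x. x \<in> S \<Longrightarrow> f x < card S"
    and m: "m \<le> card S"
  shows "card {x \<in> S. f x < m} = m"
proof -
  have img: "f ` S = {..<card S}"
    using rng inj by (intro card_subset_eq) (auto simp: card_image)
  have "f ` {x \<in> S. f x < m} = {..<m}"
  proof
    show "f ` {x \<in> S. f x < m} \<subseteq> {..<m}" by auto
    show "{..<m} \<subseteq> f ` {x \<in> S. f x < m}"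
    proof
      fix y assume "y \<in> {..<m}"
      then have "y \<in> f ` S" using img m by auto
      then obtain x where "x \<in> S" "y = f x" by blast
      then show "y \<in> f ` {x \<in> S. f x < m}" using \<open>y \<in> {..<m}\<close> by auto
    qed
  qed
  moreover have "inj_on f {x \<in> S. f x < m}" using inj by (rule inj_on_subset) auto
  ultimately show ?thesis by (metis card_image card_lessThan)
qed

lemma card_smallest:
  assumes fin: "finite S" and m: "m \<le> card S"
  shows "card (smallest m S) = m"
proof -
  let ?f = "\<lambda>x. card {y \<in> S. y < x}"
  have mono: "?f x < ?f x'" if "x \<in> S" "x' \<in> S" "x < x'" for x x'
    using that fin by (intro psubset_card_mono) auto
  have "inj_on ?f S"
  proof (rule inj_onI)
    fix x x' assume "x \<in> S" "x' \<in> S" "?f x = ?f x'"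
    then show "x = x'" using mono[of x x'] mono[of x' x] by (metis less_irrefl nat_neq_iff)
  qed
  moreover have "?f x < card S" if "x \<in> S" for x
    using that fin by (intro psubset_card_mono) auto
  ultimately show ?thesis unfolding smallest_def using rank_card[OF fin _ _ m] by blast
qed

lemma card_largest:
  assumes fin: "finite S" and m: "m \<le> card S"
  shows "card (largest m S) = m"
proof -
  let ?f = "\<lambda>x. card {y \<in> S. x < y}"
  have mono: "?f x' < ?f x" if "x \<in> S" "x' \<in> S" "x < x'" for x x'
    using that fin by (intro psubset_card_mono) auto
  have "inj_on ?f S"
  proof (rule inj_onI)
    fix x x' assume "x \<in> S" "x' \<in> S" "?f x = ?f x'"
    then show "x = x'" using mono[of x x'] mono[of x' x] by (metis less_irrefl nat_neq_iff)
  qed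
  moreover have "?f x < card S" if "x \<in> S" for x
    using that fin by (intro psubset_card_mono) auto
  ultimately show ?thesis unfolding largest_def using rank_card[OF fin _ _ m] by blast
qed

lemma ICbar1_sub: "ICbar1 n i j \<subseteq> IC1 n i j"
  unfolding ICbar1_def smallest_def largest_def by auto

lemma card_ICbar1: "card (ICbar1 n i j) = min (gamma1 n i j) (gamma1 n j i)"
  unfolding ICbar1_def using card_smallest[of "IC1 n i j" "gamma1 n j i"]
    card_largest[of "IC1 n i j" "gamma1 n j i"]
  by (auto simp: gamma1_def)

theorem proposition5:
  fixes n i :: nat
  assumes "n \<ge> 1" and "i < n"
  shows "card (IA2 n i) = card (IB2 n i)"
proof -
  let ?J = "{0..n} - {i}"
  let ?U = "\<Union>j \<in> ?J. ICbar1 n i j"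
  let ?V = "\<Union>j \<in> ?J. ICbar1 n j i"
  have U_sub: "?U \<subseteq> IA1 n i" using ICbar1_sub by (fastforce simp: IC1_def)
  have V_sub: "?V \<subseteq> IB1 n i" using ICbar1_sub by (fastforce simp: IC1_def)
  have finU: "finite (ICbar1 n a b)" for a b by (rule finite_subset[OF ICbar1_sub]) simp
  have cU: "card ?U = (\<Sum>j\<in>?J. card (ICbar1 n i j))"
  proof (rule card_UN_disjoint)
    show "\<forall>j\<in>?J. \<forall>j'\<in>?J. j \<noteq> j' \<longrightarrow> ICbar1 n i j \<inter> ICbar1 n i j' = {}"
    proof (intro ballI impI)
      fix j j' assume "j \<in> ?J" "j' \<in> ?J" "j \<noteq> j'"
      have "ICbar1 n i j \<subseteq> IB n j" "ICbar1 n i j' \<subseteq> IB n j'"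
        using ICbar1_sub by (fastforce simp: IC1_def IB1_def)+
      then show "ICbar1 n i j \<inter> ICbar1 n i j' = {}" using \<open>j \<noteq> j'\<close> by (auto simp: IB_def)
    qed
  qed (auto simp: finU)
  have cV: "card ?V = (\<Sum>j\<in>?J. card (ICbar1 n j i))"
  proof (rule card_UN_disjoint)
    show "\<forall>j\<in>?J. \<forall>j'\<in>?J. j \<noteq> j' \<longrightarrow> ICbar1 n j i \<inter> ICbar1 n j' i = {}"
    proof (intro ballI impI)
      fix j j' assume "j \<in> ?J" "j' \<in> ?J" "j \<noteq> j'"
      have "ICbar1 n j i \<subseteq> IA n j" "ICbar1 n j' i \<subseteq> IA n j'"
        using ICbar1_sub by (fastforce simp: IC1_def IA1_def)+
      then show "ICbar1 n j i \<inter> ICbar1 n j' i = {}" using \<open>j \<noteq> j'\<close> by (auto simp: IA_def)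
    qed
  qed (auto simp: finU)
  have sums: "(\<Sum>j\<in>?J. card (ICbar1 n i j)) = (\<Sum>j\<in>?J. card (ICbar1 n j i))"
    by (simp add: card_ICbar1 min.commute)
  have cAB: "card (IA n i) = card (IB n i)" using assms by (simp add: card_IA card_IB)
  have c1: "card (IA1 n i) = card (IB1 n i)"
    unfolding IA1_def IB1_def using cAB
    by (simp add: card_Diff_subset_Int Int_commute)
  have "card (IA2 n i) = card (IA1 n i) - card ?U"
    unfolding IA2_def using U_sub by (simp add: card_Diff_subset finite_subset)
  also have "\<dots> = card (IB1 n i) - card ?V" using c1 cU cV sums by simp
  also have "\<dots> = card (IB2 n i)"
    unfolding IB2_def using V_sub by (simp add: card_Diff_subset finite_subset)
  finally show ?thesis .
qed

end
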